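(* The matrix $B^*_0$ is positive definite, i.e. all its eigenvalues are strictly positive.
   Context: Fix integers $d,M\ge1$. The activation $\sigma:\mathbb R\to\mathbb R$ is differentiable, non-polynomial, bounded and Lipschitz, with $\sigma'$ bounded and Lipschitz. The points $x^1,\dots,x^M\in\mathbb R^d$ are nonzero, bounded, and the lines $\{\xi x^m:\xi\in\mathbb R\}$ pairwise meet only at the origin. $\mu_0$ is a probability measure on $\mathbb R\times\mathbb R^d\times\mathbb R$ (variables $(c,w,\eta)$) under which $c$ is independent of $(w,\eta)$, $c$ is mean zero with compact support, and the law of $(w,\eta)$ assigns positive probability to every set of positive Lebesgue measure. $(B^*_0)_{mn}=\frac1M\int[\sigma(w\cdot x^m+\eta)\sigma(w\cdot x^n+\eta)+c^2\sigma'(w\cdot x^m+\eta)\sigma'(w\cdot x^n+\eta)(x^m\cdot x^n+1)]\,d\mu_0(c,w,\eta)$. *)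

theory Defs
  imports "HOL-Probability.Probability" "HOL-Computational_Algebra.Polynomial"
begin

text \<open>The matrix B*_0, indexed by the finite type 'm (with M = CARD('m));
  points x m in real^'d; mu0 a measure on (c, w, eta).\<close>
definition Bstar0 ::
  "(real \<Rightarrow> real) \<Rightarrow> ('m::finite \<Rightarrow> real^'d::finite) \<Rightarrow> (real \<times> (real^'d) \<times> real) measure \<Rightarrow> real^'m^'m"
  where "Bstar0 \<sigma> x \<mu> = (\<chi> m n. (1 / real CARD('m)) *
     integral\<^sup>L \<mu> (\<lambda>(c, w, \<eta>).
        \<sigma> (w \<bullet> x m + \<eta>) * \<sigma> (w \<bullet> x n + \<eta>)
        + c\<^sup>2 * deriv \<sigma> (w \<bullet> x m + \<eta>) * deriv \<sigma> (w \<bullet> x n + \<eta>) * (x m \<bullet> x n + 1)))"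

definition pos_definite :: "real^'n::finite^'n \<Rightarrow> bool"
  where "pos_definite A \<longleftrightarrow> (\<forall>v. v \<noteq> 0 \<longrightarrow> v \<bullet> (A *v v) > 0)"

end

theory Submission
  imports Defs
begin

lemma bounded_shift_const:
  fixes f :: "real \<Rightarrow> real"
  assumes bd: "bounded (range f)"
    and sh: "\<And>\<delta>. \<exists>c. \<forall>s. f (s + \<delta>) - f s = c"
  shows "f s = f t"
proof -
  obtain B where B: "\<And>y. \<bar>f y\<bar> \<le> B" using bd unfolding bounded_iff by auto
  define \<delta> where "\<delta> = t - s"
  obtain c where c: "\<And>y. f (y + \<delta>) - f y = c" using sh by blast
  have n: "f (s + real n * \<delta>) = f s + real n * c" for n
  proof (induction n)
    case 0 then show ?case by simp
  next
    case (Suc n)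
    have "f (s + real (Suc n) * \<delta>) = f ((s + real n * \<delta>) + \<delta>)" by (simp add: algebra_simps)
    also have "\<dots> = f (s + real n * \<delta>) + c" using c[of "s + real n * \<delta>"] by linarith
    finally show ?case using Suc by (simp add: algebra_simps)
  qed
  have "c = 0"
  proof (rule ccontr)
    assume "c \<noteq> 0"
    obtain n :: nat where "real n > 2 * B / \<bar>c\<bar>" using reals_Archimedean2 by blast
    then have "real n * \<bar>c\<bar> > 2 * B" using \<open>c \<noteq> 0\<close> by (simp add: field_simps)
    moreover have "\<bar>real n * c\<bar> \<le> 2 * B" using B[of "s + real n * \<delta>"] B[of s] n[of n] by linarith
    ultimately show False by (simp add: abs_mult)
  qed
  then show ?thesis using c[of s] by (simp add: \<delta>_def)
qed

lemma ridge_indep: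
  fixes p :: "'m \<Rightarrow> 'a::real_inner"
  assumes "finite S" "inj_on p S"
  shows "\<forall>f. (\<forall>m\<in>S. bounded (range (f m))) \<longrightarrow> (\<forall>w \<eta>. (\<Sum>m\<in>S. f m (w \<bullet> p m + \<eta>)) = (0::real))
           \<longrightarrow> (\<forall>m\<in>S. \<forall>s t. f m s = f m t)"
  using assms
proof (induction S rule: finite_induct)
  case empty then show ?case by simp
next
  case (insert a S)
  show ?case
  proof (intro allI impI)
    fix f :: "'m \<Rightarrow> real \<Rightarrow> real"
    assume bd: "\<forall>m\<in>insert a S. bounded (range (f m))"
      and eq: "\<forall>w \<eta>. (\<Sum>m\<in>insert a S. f m (w \<bullet> p m + \<eta>)) = 0"
    have inj: "inj_on p S" using insert.prems by (auto simp: inj_on_def)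
    have IH: "\<forall>m\<in>S. \<forall>s t. g m s = g m t"
      if "\<forall>m\<in>S. bounded (range (g m))" "\<forall>w \<eta>. (\<Sum>m\<in>S. g m (w \<bullet> p m + \<eta>)) = 0" for g :: "'m \<Rightarrow> real \<Rightarrow> real"
      using insert.IH[OF inj, rule_format, of g] that by simp
    have diff: "\<forall>m\<in>S. \<forall>s t. f m (s + h * (z \<bullet> (p m - p a))) - f m s = f m (t + h * (z \<bullet> (p m - p a))) - f m t"
      for h z
    proof -
      define g where "g = (\<lambda>m s. f m (s + h * (z \<bullet> (p m - p a))) - f m s)"
      have "\<forall>m\<in>S. bounded (range (g m))"
      proof
        fix m assume "m \<in> S"
        then obtain B where B: "\<And>y. \<bar>f m y\<bar> \<le> B" using bd unfolding bounded_iff by force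
        have "\<bar>g m y\<bar> \<le> 2 * B" for y using B[of y] B[of "y + h * (z \<bullet> (p m - p a))"] unfolding g_def by linarith
        then show "bounded (range (g m))" unfolding bounded_iff by auto
      qed
      moreover have "\<forall>w \<eta>. (\<Sum>m\<in>S. g m (w \<bullet> p m + \<eta>)) = 0"
      proof (intro allI)
        fix w \<eta>
        have e1: "f a (w \<bullet> p a + \<eta>) + (\<Sum>m\<in>S. f m (w \<bullet> p m + \<eta>)) = 0"
          using eq[rule_format, of w \<eta>] insert.hyps by simp
        have e2: "f a ((w + h *\<^sub>R z) \<bullet> p a + (\<eta> - h * (z \<bullet> p a))) + (\<Sum>m\<in>S. f m ((w + h *\<^sub>R z) \<bullet> p m + (\<eta> - h * (z \<bullet> p a)))) = 0"
          using eq[rule_format, of "w + h *\<^sub>R z" "\<eta> - h * (z \<bullet> p a)"] insert.hyps by simp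
        have r1: "(w + h *\<^sub>R z) \<bullet> p a + (\<eta> - h * (z \<bullet> p a)) = w \<bullet> p a + \<eta>"
          by (simp add: inner_add_left algebra_simps)
        have r2: "(w + h *\<^sub>R z) \<bullet> p m + (\<eta> - h * (z \<bullet> p a)) = (w \<bullet> p m + \<eta>) + h * (z \<bullet> (p m - p a))" for m
          by (simp add: inner_add_left inner_diff_right algebra_simps)
        have "(\<Sum>m\<in>S. g m (w \<bullet> p m + \<eta>)) = (\<Sum>m\<in>S. f m ((w + h *\<^sub>R z) \<bullet> p m + (\<eta> - h * (z \<bullet> p a)))) - (\<Sum>m\<in>S. f m (w \<bullet> p m + \<eta>))"
          unfolding g_def r2 by (simp add: sum_subtractf)
        then show "(\<Sum>m\<in>S. g m (w \<bullet> p m + \<eta>)) = 0" using e1 e2 r1 by simp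
      qed
      ultimately have "\<forall>m\<in>S. \<forall>s t. g m s = g m t" by (rule IH)
      then show ?thesis unfolding g_def by blast
    qed
    have constS: "\<forall>s t. f m s = f m t" if "m \<in> S" for m
    proof (intro allI)
      fix s t
      define z where "z = p m - p a"
      have "p m \<noteq> p a" using insert.prems insert.hyps that by (auto simp: inj_on_def)
      then have zz: "z \<bullet> z > 0" unfolding z_def by simp
      show "f m s = f m t"
      proof (rule bounded_shift_const[of "f m"])
        show "bounded (range (f m))" using bd that by auto
        fix \<delta>
        have "\<forall>s t. f m (s + (\<delta> / (z \<bullet> z)) * (z \<bullet> (p m - p a))) - f m s = f m (t + (\<delta> / (z \<bullet> z)) * (z \<bullet> (p m - p a))) - f m t"
          using diff that by blast
        moreover have "(\<delta> / (z \<bullet> z)) * (z \<bullet> (p m - p a)) = \<delta>" using zz unfolding z_def by simp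
        ultimately have "\<forall>s t. f m (s + \<delta>) - f m s = f m (t + \<delta>) - f m t" by simp
        then show "\<exists>c. \<forall>s. f m (s + \<delta>) - f m s = c" by blast
      qed
    qed
    have "\<forall>s t. f a s = f a t"
    proof (intro allI)
      fix s t
      have e1: "f a s + (\<Sum>m\<in>S. f m s) = 0" using eq[rule_format, of 0 s] insert.hyps by auto
      have e2: "f a t + (\<Sum>m\<in>S. f m t) = 0" using eq[rule_format, of 0 t] insert.hyps by auto
      have "(\<Sum>m\<in>S. f m s) = (\<Sum>m\<in>S. f m t)" using constS by (intro sum.cong) auto
      then show "f a s = f a t" using e1 e2 by linarith
    qed
    then show "\<forall>m\<in>insert a S. \<forall>s t. f m s = f m t" using constS by auto
  qed
qed

lemma quad_lower:
  fixes v s d :: "'m::finite \<Rightarrow> real" and x :: "'m \<Rightarrow> 'a::real_inner" and c :: real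
  shows "(\<Sum>i\<in>UNIV. v i * s i)\<^sup>2 \<le> (\<Sum>i\<in>UNIV. \<Sum>j\<in>UNIV. v i * v j * (s i * s j + c\<^sup>2 * d i * d j * (x i \<bullet> x j + 1)))"
proof -
  define X where "X = (\<Sum>i\<in>UNIV. (v i * d i) *\<^sub>R x i)"
  have "(\<Sum>i\<in>UNIV. \<Sum>j\<in>UNIV. v i * v j * (s i * s j + c\<^sup>2 * d i * d j * (x i \<bullet> x j + 1)))
      = (\<Sum>i\<in>UNIV. v i * s i)\<^sup>2 + c\<^sup>2 * (X \<bullet> X + (\<Sum>i\<in>UNIV. v i * d i)\<^sup>2)"
    unfolding X_def power2_eq_square
    by (simp add: inner_sum_left inner_sum_right sum_distrib_left sum_distrib_right sum.distrib algebra_simps)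
       (intro sum.cong refl, subst inner_commute, rule refl)
  moreover have "0 \<le> c\<^sup>2 * (X \<bullet> X + (\<Sum>i\<in>UNIV. v i * d i)\<^sup>2)" by simp
  ultimately show ?thesis by linarith
qed


theorem mainTheorem8:
  fixes \<sigma> :: "real \<Rightarrow> real"
    and x :: "'m::finite \<Rightarrow> real^'d::finite"
    and \<mu>0 :: "(real \<times> (real^'d) \<times> real) measure"
  assumes sigma_diff: "\<And>t. \<sigma> differentiable at t"
    and sigma_nonpoly: "\<not> (\<exists>p :: real poly. \<forall>t. \<sigma> t = poly p t)"
    and sigma_bdd: "bounded (range \<sigma>)"
    and sigma_lip: "\<exists>L. L-lipschitz_on UNIV \<sigma>"
    and dsigma_bdd: "bounded (range (deriv \<sigma>))"
    and dsigma_lip: "\<exists>L. L-lipschitz_on UNIV (deriv \<sigma>)"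
    and x_nonzero: "\<And>m. x m \<noteq> 0"
    and x_bdd: "bounded (range x)"
    and x_lines: "\<And>m n \<xi> \<zeta>. m \<noteq> n \<Longrightarrow> \<xi> *\<^sub>R x m = \<zeta> *\<^sub>R x n \<Longrightarrow> \<xi> *\<^sub>R x m = 0"
    and mu_prob: "prob_space \<mu>0"
    and mu_sets: "sets \<mu>0 = sets borel"
    and c_indep: "prob_space.indep_set \<mu>0
       {fst -` A \<inter> space \<mu>0 | A. A \<in> sets (borel :: real measure)}
       {snd -` B \<inter> space \<mu>0 | B. B \<in> sets (borel :: ((real^'d) \<times> real) measure)}"
    and c_integrable: "integrable \<mu>0 fst"
    and c_mean: "integral\<^sup>L \<mu>0 fst = 0"
    and c_supp: "\<exists>K. compact K \<and> (AE z in \<mu>0. fst z \<in> K)"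
    and wn_pos: "\<And>A. A \<in> sets (borel :: ((real^'d) \<times> real) measure) \<Longrightarrow> emeasure lborel A > 0 \<Longrightarrow>
                   measure \<mu>0 (snd -` A \<inter> space \<mu>0) > 0"
  shows "pos_definite (Bstar0 \<sigma> x \<mu>0) \<and>
         (\<forall>(l::real) v. v \<noteq> 0 \<and> Bstar0 \<sigma> x \<mu>0 *v v = l *\<^sub>R v \<longrightarrow> l > 0)"
proof -
  interpret P: prob_space \<mu>0 by (rule mu_prob)
  have space: "space \<mu>0 = UNIV" using sets_eq_imp_space_eq[OF mu_sets] by simp
  have cont_s: "continuous_on UNIV \<sigma>"
    using sigma_diff by (meson continuous_at_imp_continuous_on differentiable_imp_continuous_within)
  have cont_d: "continuous_on UNIV (deriv \<sigma>)" using dsigma_lip lipschitz_on_continuous_on by blast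
  have meas_s[measurable]: "\<sigma> \<in> borel_measurable borel" by (rule borel_measurable_continuous_onI[OF cont_s])
  have meas_d[measurable]: "deriv \<sigma> \<in> borel_measurable borel" by (rule borel_measurable_continuous_onI[OF cont_d])
  obtain Bs where Bs: "\<And>t. \<bar>\<sigma> t\<bar> \<le> Bs" using sigma_bdd unfolding bounded_iff by auto
  obtain Bd where Bd: "\<And>t. \<bar>deriv \<sigma> t\<bar> \<le> Bd" using dsigma_bdd unfolding bounded_iff by auto
  obtain K where K: "compact K" "AE z in \<mu>0. fst z \<in> K" using c_supp by blast
  obtain R where R: "\<And>y. y \<in> K \<Longrightarrow> \<bar>y\<bar> \<le> R"
    using compact_imp_bounded[OF K(1)] unfolding bounded_iff by auto
  have AEc: "AE z in \<mu>0. \<bar>fst z\<bar> \<le> R" using K(2) by (rule eventually_mono) (use R in auto)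
  define I where "I m n = (\<lambda>z::real \<times> (real^'d) \<times> real. \<sigma> (fst (snd z) \<bullet> x m + snd (snd z)) * \<sigma> (fst (snd z) \<bullet> x n + snd (snd z))
        + (fst z)\<^sup>2 * deriv \<sigma> (fst (snd z) \<bullet> x m + snd (snd z)) * deriv \<sigma> (fst (snd z) \<bullet> x n + snd (snd z)) * (x m \<bullet> x n + 1))" for m n
  define B where "B = Bstar0 \<sigma> x \<mu>0"
  have B_eq: "B $ m $ n = (1 / real CARD('m)) * integral\<^sup>L \<mu>0 (I m n)" for m n
    unfolding B_def Bstar0_def I_def by (simp add: split_beta')
  have meas_cong: "f \<in> borel_measurable \<mu>0" if "f \<in> borel_measurable borel" for f :: "real \<times> (real^'d) \<times> real \<Rightarrow> real"
  proof -
    have "measurable \<mu>0 (borel :: real measure) = measurable borel borel"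
      by (rule measurable_cong_sets[OF mu_sets refl])
    then show ?thesis using that by simp
  qed
  have meas_I: "I m n \<in> borel_measurable \<mu>0" for m n
  proof (rule meas_cong, rule borel_measurable_continuous_onI)
    show "continuous_on UNIV (I m n)" unfolding I_def
      by (intro continuous_intros continuous_on_compose2[OF cont_s] continuous_on_compose2[OF cont_d]) auto
  qed
  have int_I: "integrable \<mu>0 (I m n)" for m n
  proof (rule P.integrable_const_bound[OF _ meas_I])
    show "AE z in \<mu>0. norm (I m n z) \<le> Bs * Bs + R\<^sup>2 * (Bd * Bd) * (\<bar>x m \<bullet> x n\<bar> + 1)"
      using AEc
    proof (rule eventually_mono)
      fix z :: "real \<times> (real^'d) \<times> real"
      assume cz: "\<bar>fst z\<bar> \<le> R"
      obtain c w \<eta> where z: "z = (c, w, \<eta>)" by (cases z) auto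
      note I_def[simp]
      define a1 where "a1 = \<sigma> (w \<bullet> x m + \<eta>)"
      define a2 where "a2 = \<sigma> (w \<bullet> x n + \<eta>)"
      define b1 where "b1 = deriv \<sigma> (w \<bullet> x m + \<eta>)"
      define b2 where "b2 = deriv \<sigma> (w \<bullet> x n + \<eta>)"
      have h1: "\<bar>a1 * a2\<bar> \<le> Bs * Bs" unfolding abs_mult a1_def a2_def
        by (rule mult_mono[OF Bs Bs]) (use Bs[of 0] in auto)
      have h2: "\<bar>b1 * b2\<bar> \<le> Bd * Bd" unfolding abs_mult b1_def b2_def
        by (rule mult_mono[OF Bd Bd]) (use Bd[of 0] in auto)
      have h3: "c\<^sup>2 \<le> R\<^sup>2" using cz z power_mono[of "\<bar>c\<bar>" R 2] by simp
      have h4: "\<bar>x m \<bullet> x n + 1\<bar> \<le> \<bar>x m \<bullet> x n\<bar> + 1" by linarith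
      have "\<bar>c\<^sup>2 * b1 * b2 * (x m \<bullet> x n + 1)\<bar> = c\<^sup>2 * \<bar>b1 * b2\<bar> * \<bar>x m \<bullet> x n + 1\<bar>"
        by (simp add: abs_mult)
      also have "\<dots> \<le> R\<^sup>2 * (Bd * Bd) * (\<bar>x m \<bullet> x n\<bar> + 1)"
        by (intro mult_mono h2 h3 h4) auto
      finally have "\<bar>c\<^sup>2 * b1 * b2 * (x m \<bullet> x n + 1)\<bar> \<le> R\<^sup>2 * (Bd * Bd) * (\<bar>x m \<bullet> x n\<bar> + 1)" .
      then show "norm (I m n z) \<le> Bs * Bs + R\<^sup>2 * (Bd * Bd) * (\<bar>x m \<bullet> x n\<bar> + 1)"
        using h1 unfolding I_def z a1_def a2_def b1_def b2_def by simp
    qed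
  qed
  define F where "F v y = (\<Sum>m\<in>UNIV. v $ m * \<sigma> (fst y \<bullet> x m + snd y))" for v :: "real^'m" and y :: "(real^'d) \<times> real"
  have cont_F: "continuous_on UNIV (F v)" for v
    unfolding F_def by (intro continuous_intros continuous_on_compose2[OF cont_s]) auto
  have meas_F2: "(\<lambda>z. (F v (snd z))\<^sup>2) \<in> borel_measurable \<mu>0" for v
  proof (rule meas_cong)
    have "continuous_on UNIV (\<lambda>z::real \<times> (real^'d) \<times> real. (F v (snd z))\<^sup>2)"
      by (intro continuous_intros continuous_on_compose2[OF cont_F]) auto
    then show "(\<lambda>z::real \<times> (real^'d) \<times> real. (F v (snd z))\<^sup>2) \<in> borel_measurable borel" by (rule borel_measurable_continuous_onI)
  qed
  have int_F2: "integrable \<mu>0 (\<lambda>z. (F v (snd z))\<^sup>2)" for v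
  proof (rule P.integrable_const_bound[OF _ meas_F2])
    have bF: "\<bar>F v y\<bar> \<le> (\<Sum>m\<in>UNIV. \<bar>v $ m\<bar> * Bs)" for y
    proof -
      have "\<bar>F v y\<bar> \<le> (\<Sum>m\<in>UNIV. \<bar>v $ m * \<sigma> (fst y \<bullet> x m + snd y)\<bar>)"
        unfolding F_def by (rule sum_abs)
      also have "\<dots> \<le> (\<Sum>m\<in>UNIV. \<bar>v $ m\<bar> * Bs)"
        by (intro sum_mono) (simp add: abs_mult mult_left_mono Bs)
      finally show ?thesis .
    qed
    show "AE z in \<mu>0. norm ((F v (snd z))\<^sup>2) \<le> (\<Sum>m\<in>UNIV. \<bar>v $ m\<bar> * Bs)\<^sup>2"
    proof (intro AE_I2)
      fix z :: "real \<times> (real^'d) \<times> real"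
      have "\<bar>F v (snd z)\<bar>\<^sup>2 \<le> (\<Sum>m\<in>UNIV. \<bar>v $ m\<bar> * Bs)\<^sup>2"
        by (rule power_mono[OF bF]) simp
      then show "norm ((F v (snd z))\<^sup>2) \<le> (\<Sum>m\<in>UNIV. \<bar>v $ m\<bar> * Bs)\<^sup>2" by simp
    qed
  qed
  have quad: "v \<bullet> (B *v v) \<ge> (1 / real CARD('m)) * integral\<^sup>L \<mu>0 (\<lambda>z. (F v (snd z))\<^sup>2)" for v
  proof -
    define Q where "Q z = (\<Sum>i\<in>UNIV. \<Sum>j\<in>UNIV. v $ i * v $ j * I i j z)" for z
    have e1: "v \<bullet> (B *v v) = (\<Sum>i\<in>UNIV. \<Sum>j\<in>UNIV. v $ i * v $ j * B $ i $ j)"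
      by (simp add: inner_vec_def matrix_vector_mult_def sum_distrib_left mult_ac)
    have intij: "integrable \<mu>0 (\<lambda>z. v $ i * v $ j * I i j z)" for i j
      using int_I[of i j] by simp
    have e2: "integral\<^sup>L \<mu>0 Q = (\<Sum>i\<in>UNIV. \<Sum>j\<in>UNIV. v $ i * v $ j * integral\<^sup>L \<mu>0 (I i j))"
    proof -
      have "integral\<^sup>L \<mu>0 Q = (\<Sum>i\<in>UNIV. integral\<^sup>L \<mu>0 (\<lambda>z. \<Sum>j\<in>UNIV. v $ i * v $ j * I i j z))"
        unfolding Q_def by (rule Bochner_Integration.integral_sum) (intro Bochner_Integration.integrable_sum intij)
      also have "\<dots> = (\<Sum>i\<in>UNIV. \<Sum>j\<in>UNIV. integral\<^sup>L \<mu>0 (\<lambda>z. v $ i * v $ j * I i j z))"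
        by (intro sum.cong refl Bochner_Integration.integral_sum intij)
      also have "\<dots> = (\<Sum>i\<in>UNIV. \<Sum>j\<in>UNIV. v $ i * v $ j * integral\<^sup>L \<mu>0 (I i j))"
        by simp
      finally show ?thesis .
    qed
    have intQ: "integrable \<mu>0 Q" unfolding Q_def by (intro Bochner_Integration.integrable_sum intij)
    have le: "integral\<^sup>L \<mu>0 (\<lambda>z. (F v (snd z))\<^sup>2) \<le> integral\<^sup>L \<mu>0 Q"
    proof (rule integral_mono[OF int_F2 intQ])
      fix z :: "real \<times> (real^'d) \<times> real"
      show "(F v (snd z))\<^sup>2 \<le> Q z"
        unfolding Q_def I_def F_def
        using quad_lower[where v="\<lambda>i. v $ i" and s="\<lambda>i. \<sigma> (fst (snd z) \<bullet> x i + snd (snd z))"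
            and d="\<lambda>i. deriv \<sigma> (fst (snd z) \<bullet> x i + snd (snd z))" and x=x and c="fst z"]
        by simp
    qed
    have "v \<bullet> (B *v v) = (1 / real CARD('m)) * integral\<^sup>L \<mu>0 Q"
      unfolding e1 e2 B_eq by (simp add: sum_distrib_left mult_ac)
    then show ?thesis using le by (simp add: divide_right_mono)
  qed
  have injx: "inj x"
  proof (rule injI, rule ccontr)
    fix m n assume "x m = x n" "m \<noteq> n"
    then have "1 *\<^sub>R x m = 0" using x_lines[of m n 1 1] by simp
    then show False using x_nonzero[of m] by simp
  qed
  have meas_snd: "snd \<in> measurable \<mu>0 (borel :: ((real^'d) \<times> real) measure)"
  proof -
    have "measurable \<mu>0 (borel :: ((real^'d) \<times> real) measure) = measurable borel borel"
      by (rule measurable_cong_sets[OF mu_sets refl])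
    moreover have "(snd :: real \<times> (real^'d) \<times> real \<Rightarrow> _) \<in> borel_measurable borel"
      by (rule borel_measurable_continuous_onI) (intro continuous_intros)
    ultimately show ?thesis by simp
  qed
  have posF: "integral\<^sup>L \<mu>0 (\<lambda>z. (F v (snd z))\<^sup>2) > 0" if vnz: "v \<noteq> 0" for v
  proof (rule ccontr)
    assume "\<not> integral\<^sup>L \<mu>0 (\<lambda>z. (F v (snd z))\<^sup>2) > 0"
    moreover have "0 \<le> integral\<^sup>L \<mu>0 (\<lambda>z. (F v (snd z))\<^sup>2)" by (rule integral_nonneg_AE) simp
    ultimately have "integral\<^sup>L \<mu>0 (\<lambda>z. (F v (snd z))\<^sup>2) = 0" by linarith
    then have AE0: "AE z in \<mu>0. (F v (snd z))\<^sup>2 = 0"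
      using integral_nonneg_eq_0_iff_AE[OF int_F2] by simp
    define U where "U = {y. F v y \<noteq> 0}"
    have openU: "open U" unfolding U_def by (rule open_Collect_neq[OF cont_F]) (rule continuous_on_const)
    have Uborel: "U \<in> sets borel" by (rule borel_open[OF openU])
    have "U = {}"
    proof (rule ccontr)
      assume "U \<noteq> {}"
      then have "\<not> negligible U" using open_not_negligible openU by blast
      then have nn: "U \<notin> null_sets lebesgue" by (simp add: negligible_iff_null_sets)
      have "emeasure lborel U \<noteq> 0"
      proof
        assume "emeasure lborel U = 0"
        then have "U \<in> null_sets lborel" using Uborel by (simp add: null_sets_def)
        then have "U \<in> null_sets lebesgue" by (rule null_sets_completionI)
        then show False using nn by simp
      qed
      then have "emeasure lborel U > 0" by (simp add: zero_less_iff_neq_zero)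
      then have pos: "measure \<mu>0 (snd -` U \<inter> space \<mu>0) > 0" using wn_pos Uborel by blast
      have meas: "snd -` U \<inter> space \<mu>0 \<in> sets \<mu>0" by (rule measurable_sets[OF meas_snd Uborel])
      have "{z \<in> space \<mu>0. \<not> (F v (snd z))\<^sup>2 = 0} = snd -` U \<inter> space \<mu>0" unfolding U_def by auto
      then have "emeasure \<mu>0 (snd -` U \<inter> space \<mu>0) = 0"
        using AE_iff_measurable[OF meas] AE0 by simp
      then show False using pos by (simp add: measure_def)
    qed
    then have eq0: "\<forall>w \<eta>. (\<Sum>m\<in>UNIV. v $ m * \<sigma> (w \<bullet> x m + \<eta>)) = 0"
      unfolding U_def F_def by auto
    have bdm: "\<forall>m\<in>UNIV. bounded (range (\<lambda>s. v $ m * \<sigma> s))"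
    proof
      fix m
      have "\<bar>v $ m * \<sigma> s\<bar> \<le> \<bar>v $ m\<bar> * Bs" for s by (simp add: abs_mult mult_left_mono Bs)
      then show "bounded (range (\<lambda>s. v $ m * \<sigma> s))" unfolding bounded_iff by auto
    qed
    have const: "\<forall>m\<in>UNIV. \<forall>s t. v $ m * \<sigma> s = v $ m * \<sigma> t"
    proof -
      have RI: "\<forall>f. (\<forall>m\<in>(UNIV::'m set). bounded (range (f m))) \<longrightarrow> (\<forall>w \<eta>. (\<Sum>m\<in>UNIV. f m (w \<bullet> x m + \<eta>)) = (0::real))
           \<longrightarrow> (\<forall>m\<in>UNIV. \<forall>s t. f m s = f m t)"
        by (rule ridge_indep) (simp_all add: injx)
      show ?thesis using RI[rule_format, of "\<lambda>m s. v $ m * \<sigma> s"] bdm eq0 by blast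
    qed
    obtain i where "v $ i \<noteq> 0" using vnz by (metis vec_eq_iff zero_index)
    then have "\<sigma> t = \<sigma> 0" for t using const by auto
    then have "\<forall>t. \<sigma> t = poly [:\<sigma> 0:] t" by simp
    then show False using sigma_nonpoly by blast
  qed
  have pd: "pos_definite B"
    unfolding pos_definite_def
  proof (intro allI impI)
    fix v :: "real^'m" assume "v \<noteq> 0"
    have "0 < (1 / real CARD('m)) * integral\<^sup>L \<mu>0 (\<lambda>z. (F v (snd z))\<^sup>2)"
      using posF[OF \<open>v \<noteq> 0\<close>] by simp
    then show "v \<bullet> (B *v v) > 0" using quad[of v] by linarith
  qed
  moreover have "\<forall>(l::real) v. v \<noteq> 0 \<and> B *v v = l *\<^sub>R v \<longrightarrow> l > 0"
  proof (intro allI impI)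
    fix l :: real and v :: "real^'m"
    assume h: "v \<noteq> 0 \<and> B *v v = l *\<^sub>R v"
    then have "0 < v \<bullet> (B *v v)" using pd unfolding pos_definite_def by blast
    also have "v \<bullet> (B *v v) = l * (v \<bullet> v)" using h by simp
    finally show "l > 0" using h inner_ge_zero[of v] by (auto simp add: zero_less_mult_iff)
  qed
  ultimately show ?thesis unfolding B_def by blast
qed

end
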